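(* Let $d\ge2$ and $m\ge1$. For each of the classes $\mathcal{H}_\Box$ and $\mathcal{H}_\Box^-$ on $\mathbb{R}_+^d$, there is a pool of size $m$ whose active label complexity is $m$.
   Context: For $\mathbf a\in\mathbb{R}_+^d$, $h_{\mathbf a}(x)=2\mathbb{I}[\exists i\in[d],\ x[i]\ge a[i]]-1$ and $h^-_{\mathbf a}=-h_{\mathbf a}$; $\mathcal{H}_\Box=\{h_{\mathbf a}:\mathbf a\in\mathbb{R}_+^d\}$, $\mathcal{H}_\Box^-=\{h^-_{\mathbf a}:\mathbf a\in\mathbb{R}_+^d\}$. The active label complexity of a finite unlabeled pool with respect to a class $\mathcal{H}$ is the minimum, over algorithms that sequentially query labels of pool points and, for every labeling of the pool consistent with some $h\in\mathcal{H}$, output (with probability 1) a hypothesis with zero error on the pool, of the worst-case total number of label queries. *)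

theory Defs
  imports "HOL-Analysis.Analysis"
begin

definition nonneg_orthant :: "(real^'d) set" where
  "nonneg_orthant = {x. \<forall>i. x $ i \<ge> 0}"

definition box_hyp :: "real^'d \<Rightarrow> real^'d \<Rightarrow> int" where
  "box_hyp a x = 2 * (if \<exists>i. x $ i \<ge> a $ i then 1 else 0) - 1"

definition H_box :: "(real^'d \<Rightarrow> int) set" where
  "H_box = {box_hyp a | a. a \<in> nonneg_orthant}"

definition H_box_neg :: "(real^'d \<Rightarrow> int) set" where
  "H_box_neg = {(\<lambda>x. - box_hyp a x) | a. a \<in> nonneg_orthant}"

text \<open>A (deterministic, adaptive) active learning algorithm as a decision tree:
  either output a hypothesis, or query the label of a point and continue
  in the first subtree if the label is +1, in the second otherwise.\<close>

datatype 'x qtree = Output "'x \<Rightarrow> int" | Query 'x "'x qtree" "'x qtree"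

fun run :: "'x qtree \<Rightarrow> ('x \<Rightarrow> int) \<Rightarrow> ('x \<Rightarrow> int) \<times> nat" where
  "run (Output h) y = (h, 0)"
| "run (Query x t1 t2) y =
     (let (h, n) = (if y x = 1 then run t1 y else run t2 y) in (h, Suc n))"

fun queries_in :: "'x set \<Rightarrow> 'x qtree \<Rightarrow> bool" where
  "queries_in P (Output h) = True"
| "queries_in P (Query x t1 t2) = (x \<in> P \<and> queries_in P t1 \<and> queries_in P t2)"

definition solves :: "'x set \<Rightarrow> ('x \<Rightarrow> int) set \<Rightarrow> 'x qtree \<Rightarrow> bool" where
  "solves P H t \<longleftrightarrow> queries_in P t \<and> (\<forall>h\<in>H. \<forall>x\<in>P. fst (run t h) x = h x)"

definition active_label_complexity :: "'x set \<Rightarrow> ('x \<Rightarrow> int) set \<Rightarrow> nat" where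
  "active_label_complexity P H =
     (LEAST n. \<exists>t. solves P H t \<and> (\<forall>h\<in>H. snd (run t h) \<le> n))"

end

theory Submission
  imports Defs
begin

lemma lb:
  assumes "queries_in P t" "\<forall>z\<in>U. \<forall>x\<in>P. x \<noteq> z \<longrightarrow> Y z x = y0 x"
    "U \<subseteq> P" "finite U" "snd (run t y0) < card U"
  shows "\<exists>z\<in>U. run t (Y z) = run t y0"
  using assms
proof (induction t arbitrary: U)
  case (Output h)
  then have "U \<noteq> {}" by auto
  then show ?case by auto
next
  case (Query x t1 t2)
  define t' where "t' = (if y0 x = 1 then t1 else t2)"
  have r0: "run (Query x t1 t2) y0 = (fst (run t' y0), Suc (snd (run t' y0)))"
    by (simp add: t'_def split: prod.splits)
  have q': "queries_in P t'" using Query.prems(1) by (simp add: t'_def)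
  have c: "card U \<le> Suc (card (U - {x}))"
  proof -
    have "U \<subseteq> insert x (U - {x})" by blast
    then have "card U \<le> card (insert x (U - {x}))"
      using Query.prems(4) by (intro card_mono) auto
    also have "\<dots> \<le> Suc (card (U - {x}))" using Query.prems(4) by (auto simp add: card_insert_if card_gt_0_iff)
    finally show ?thesis .
  qed
  have "snd (run t' y0) < card (U - {x})" using Query.prems(5) r0 c by simp
  moreover have "t' = t1 \<or> t' = t2" by (simp add: t'_def)
  moreover have "\<forall>z\<in>U - {x}. \<forall>x\<in>P. x \<noteq> z \<longrightarrow> Y z x = y0 x" "U - {x} \<subseteq> P" "finite (U - {x})"
    using Query.prems by auto
  ultimately obtain z where z: "z \<in> U - {x}" "run t' (Y z) = run t' y0"
    using Query.IH(1)[of "U - {x}"] Query.IH(2)[of "U - {x}"] q' by blast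
  have xP: "x \<in> P" using Query.prems(1) by simp
  have "Y z x = y0 x" using Query.prems(2) z(1) xP by auto
  then have "run (Query x t1 t2) (Y z) = (fst (run t' (Y z)), Suc (snd (run t' (Y z))))"
    by (simp add: t'_def split: prod.splits)
  then have "run (Query x t1 t2) (Y z) = run (Query x t1 t2) y0" using z(2) r0 by simp
  then show ?case using z(1) by blast
qed

fun qt :: "'x list \<Rightarrow> ('x \<Rightarrow> int) \<Rightarrow> 'x qtree" where
  "qt [] g = Output g"
| "qt (x#xs) g = Query x (qt xs (g(x:=1))) (qt xs (g(x:=-1)))"

lemma qt_run: "run (qt xs g) y =
   ((\<lambda>z. if z \<in> set xs then (if y z = 1 then 1 else -1) else g z), length xs)"
  by (induction xs arbitrary: g) (auto simp: fun_eq_iff split: prod.splits)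

lemma qt_in: "set xs \<subseteq> P \<Longrightarrow> queries_in P (qt xs g)"
  by (induction xs arbitrary: g) auto

lemma alc:
  assumes "finite P" "card P = m" "y0 \<in> H"
    "\<forall>z\<in>P. Y z \<in> H \<and> Y z z \<noteq> y0 z \<and> (\<forall>x\<in>P. x \<noteq> z \<longrightarrow> Y z x = y0 x)"
    "\<forall>h\<in>H. \<forall>x\<in>P. h x = 1 \<or> h x = -1"
  shows "active_label_complexity P H = m"
  unfolding active_label_complexity_def
proof (rule Least_equality)
  obtain xs where xs: "set xs = P" "distinct xs" using assms(1) finite_distinct_list by blast
  have len: "length xs = m" using xs assms(2) distinct_card by fastforce
  have "solves P H (qt xs g)" for g
    unfolding solves_def
  proof (intro conjI qt_in ballI)
    fix h x assume "h \<in> H" "x \<in> P"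
    then have "h x = 1 \<or> h x = -1" using assms(5) by blast
    then show "fst (run (qt xs g) h) x = h x" using xs \<open>x \<in> P\<close> by (auto simp: qt_run)
  qed (use xs in simp)
  moreover have "\<forall>h\<in>H. snd (run (qt xs g) h) \<le> m" for g by (simp add: qt_run len)
  ultimately show "\<exists>t. solves P H t \<and> (\<forall>h\<in>H. snd (run t h) \<le> m)" by blast
next
  fix n assume "\<exists>t. solves P H t \<and> (\<forall>h\<in>H. snd (run t h) \<le> n)"
  then obtain t where t: "solves P H t" "\<forall>h\<in>H. snd (run t h) \<le> n" by blast
  show "m \<le> n"
  proof (rule ccontr)
    assume "\<not> m \<le> n"
    then have "snd (run t y0) < card P" using t(2) assms(2,3) not_le_imp_less le_less_trans by blast
    then obtain z where z: "z \<in> P" "run t (Y z) = run t y0"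
      using lb[of P t P Y y0] t(1) assms(1,4) unfolding solves_def by blast
    have "fst (run t (Y z)) z = Y z z" using t(1) z(1) assms(4) unfolding solves_def by blast
    moreover have "fst (run t y0) z = y0 z" using t(1) z(1) assms(3) unfolding solves_def by blast
    moreover have "Y z z \<noteq> y0 z" using z(1) assms(4) by blast
    ultimately show False using z(2) by simp
  qed
qed


lemma box_pm: "box_hyp a x = 1 \<or> box_hyp a x = -1"
  by (simp add: box_hyp_def)

theorem corollary2:
  fixes m :: nat
  assumes "CARD('d::finite) \<ge> 2" and "m \<ge> 1"
  shows "(\<exists>P :: (real^'d) set. P \<subseteq> nonneg_orthant \<and> finite P \<and> card P = m
            \<and> active_label_complexity P (H_box :: (real^'d \<Rightarrow> int) set) = m)
       \<and> (\<exists>P :: (real^'d) set. P \<subseteq> nonneg_orthant \<and> finite P \<and> card P = m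
            \<and> active_label_complexity P (H_box_neg :: (real^'d \<Rightarrow> int) set) = m)"
proof -
  obtain i1 i2 :: 'd where i12: "i1 \<noteq> i2"
  proof -
    have "\<not> CARD('d) \<le> Suc 0" using assms(1) by simp
    then have "\<not> (\<forall>x\<in>(UNIV::'d set). \<forall>y\<in>UNIV. x = y)"
      using card_le_Suc0_iff_eq[of "UNIV::'d set"] by simp
    then show ?thesis using that by blast
  qed
  define p :: "nat \<Rightarrow> real^'d" where
    "p j = (\<chi> i. if i = i1 then real j else if i = i2 then real m + 1 - real j else 0)" for j
  define P where "P = p ` {1..m}"
  define a :: "real^'d \<Rightarrow> real^'d" where
    "a z = (\<chi> i. if i = i1 then z $ i1 + 1/2 else if i = i2 then z $ i2 + 1/2 else real m + 2)" for z
  have p1: "p j $ i1 = real j" for j by (simp add: p_def)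
  have i21: "(i2 = i1) = False" using i12 by auto
  have p2: "p j $ i2 = real m + 1 - real j" for j unfolding p_def vec_lambda_beta i21 if_False by simp
  have inj: "inj_on p {1..m}"
  proof (rule inj_onI)
    fix j k assume jk: "p j = p k"
    have "real j = p j $ i1" by (rule p1[symmetric])
    also have "\<dots> = p k $ i1" by (simp only: jk)
    also have "\<dots> = real k" by (rule p1)
    finally show "j = k" by (simp only: of_nat_eq_iff)
  qed
  have finP: "finite P" unfolding P_def by (rule finite_imageI) (rule finite_atLeastAtMost)
  have cardP: "card P = m" unfolding P_def card_image[OF inj] by simp
  have p0: "p j $ i = 0" if "i \<noteq> i1" "i \<noteq> i2" for i j
    using that by (simp add: p_def)
  have a1: "a z $ i1 = z $ i1 + 1/2" for z by (simp add: a_def)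
  have a2: "a z $ i2 = z $ i2 + 1/2" for z unfolding a_def vec_lambda_beta i21 if_False by simp
  have a0: "a z $ i = real m + 2" if "i \<noteq> i1" "i \<noteq> i2" for i z
    using that by (simp add: a_def)
  have Pnn: "P \<subseteq> nonneg_orthant"
  proof
    fix x assume "x \<in> P"
    then obtain j where j: "x = p j" "j \<in> {1..m}" by (auto simp: P_def)
    have "x $ i \<ge> 0" for i
    proof (cases "i = i1")
      case True then show ?thesis using j p1 by simp
    next
      case False
      show ?thesis
      proof (cases "i = i2")
        case True
        have "real j \<le> real m" using j(2) by simp
        then show ?thesis using True j p2[of j] by simp
      next
        case False2: False
        then show ?thesis using False j p0 by simp
      qed
    qed
    then show "x \<in> nonneg_orthant" by (simp add: nonneg_orthant_def)
  qed
  have zero_nn: "(0::real^'d) \<in> nonneg_orthant" by (simp add: nonneg_orthant_def)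
  have a_nn: "a z \<in> nonneg_orthant" if zP: "z \<in> P" for z
  proof -
    have "a z $ i \<ge> 0" for i
    proof (cases "i = i1")
      case True then show ?thesis using zP Pnn a1 by (auto simp: nonneg_orthant_def)
    next
      case False
      show ?thesis
      proof (cases "i = i2")
        case True then show ?thesis using zP Pnn a2 by (auto simp: nonneg_orthant_def)
      next
        case False2: False
        then show ?thesis using False a0 by simp
      qed
    qed
    then show ?thesis by (simp add: nonneg_orthant_def)
  qed
  have y0: "box_hyp 0 x = 1" if "x \<in> P" for x
  proof -
    have "x $ i1 \<ge> 0" using that Pnn by (auto simp: nonneg_orthant_def)
    then have "\<exists>i. x $ i \<ge> (0::real^'d) $ i" by auto
    then show ?thesis unfolding box_hyp_def by simp
  qed
  have yz: "box_hyp (a z) z = -1" if zP: "z \<in> P" for z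
  proof -
    have "\<not> z $ i \<ge> a z $ i" for i
    proof (cases "i = i1")
      case True then show ?thesis using a1 by simp
    next
      case False
      show ?thesis
      proof (cases "i = i2")
        case True then show ?thesis using a2 by simp
      next
        case False2: False
        obtain k where k: "z = p k" using zP by (auto simp: P_def)
        show ?thesis using False False2 a0 p0 k by simp
      qed
    qed
    then have "\<not> (\<exists>i. z $ i \<ge> a z $ i)" by blast
    then show ?thesis unfolding box_hyp_def by simp
  qed
  have yx: "box_hyp (a z) x = 1" if zx: "z \<in> P" "x \<in> P" "x \<noteq> z" for z x
  proof -
    obtain k where k: "z = p k" "k \<in> {1..m}" using zx by (auto simp: P_def)
    obtain j where j: "x = p j" "j \<in> {1..m}" using zx by (auto simp: P_def)
    have "j \<noteq> k" using zx j k by auto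
    then have "j > k \<or> j < k" by arith
    then have "\<exists>i. x $ i \<ge> a z $ i"
    proof
      assume "j > k"
      then have "real j \<ge> real k + 1/2" by simp
      then have "x $ i1 \<ge> a z $ i1" using a1 j k p1 by simp
      then show ?thesis by blast
    next
      assume "j < k"
      then have "real m + 1 - real j \<ge> real m + 1 - real k + 1/2" by simp
      then have "x $ i2 \<ge> a z $ i2" using a2 j k p2 by simp
      then show ?thesis by blast
    qed
    then show ?thesis unfolding box_hyp_def by simp
  qed
  have A1: "box_hyp 0 \<in> (H_box :: (real^'d \<Rightarrow> int) set)" using zero_nn by (auto simp: H_box_def)
  have A2: "\<forall>z\<in>P. box_hyp (a z) \<in> (H_box :: (real^'d \<Rightarrow> int) set) \<and> box_hyp (a z) z \<noteq> box_hyp 0 z \<and>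
        (\<forall>x\<in>P. x \<noteq> z \<longrightarrow> box_hyp (a z) x = box_hyp 0 x)"
    using a_nn y0 yz yx by (auto simp: H_box_def)
  have A3: "\<forall>h\<in>(H_box :: (real^'d \<Rightarrow> int) set). \<forall>x\<in>P. h x = 1 \<or> h x = -1"
    using box_pm by (auto simp: H_box_def)
  have A: "active_label_complexity P (H_box :: (real^'d \<Rightarrow> int) set) = m"
    by (rule alc[OF finP cardP A1 A2 A3])
  have B1: "(\<lambda>x. - box_hyp 0 x) \<in> (H_box_neg :: (real^'d \<Rightarrow> int) set)"
    using zero_nn by (auto simp: H_box_neg_def)
  have B2: "\<forall>z\<in>P. (\<lambda>x. - box_hyp (a z) x) \<in> (H_box_neg :: (real^'d \<Rightarrow> int) set) \<and> - box_hyp (a z) z \<noteq> - box_hyp 0 z \<and>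
        (\<forall>x\<in>P. x \<noteq> z \<longrightarrow> - box_hyp (a z) x = - box_hyp 0 x)"
    using a_nn y0 yz yx by (auto simp: H_box_neg_def)
  have B3: "\<forall>h\<in>(H_box_neg :: (real^'d \<Rightarrow> int) set). \<forall>x\<in>P. h x = 1 \<or> h x = -1"
    using box_pm by (fastforce simp: H_box_neg_def)
  have B: "active_label_complexity P (H_box_neg :: (real^'d \<Rightarrow> int) set) = m"
    by (rule alc[OF finP cardP B1, where Y = "\<lambda>z x. - box_hyp (a z) x", OF B2 B3])
  show ?thesis using A B Pnn finP cardP by blast
qed

end
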